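(* Let $f(z) = e^{-bz^2} f_1(z)$, where $b \geq 0$ and $f_1(z) \not\equiv 0$ is a real entire function of genus $0$ or $1$. Let $g(z) = \sum_{\ell=0}^{M} c_\ell z^\ell = \prod_{j=1}^{M} (z+\alpha_j)$ (with $\alpha_1,\ldots,\alpha_M \in \mathbb{C}$) be a monic even polynomial with non-negative real coefficients $c_\ell$ having at least one non-real root. Define $\Phi(z,t) = \prod_{j=1}^{M} f(z+\alpha_j t)$ and, for $k \geq 0$, \[ A_k(z) = \frac{1}{k!}\left[\frac{\partial^k}{\partial t^k} \prod_{j=1}^{M} f(z+\alpha_j t)\right]_{t=0}, \] so that $\Phi(z,t) = \sum_{k=0}^\infty A_k(z) t^k$. Then $f$ belongs to the Laguerre–Pólya class $\mathcal{LP}$ if and only if $A_k(x) \geq 0$ for all $x \in \mathbb{R}$ and all $k \geq 0$.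
   Context: A real entire function is an entire function taking real values on the real axis. The Laguerre–Pólya class $\mathcal{LP}$ is the set of real entire functions that are limits, uniformly on compact subsets of $\mathbb{C}$, of polynomials with real coefficients having only real zeros; equivalently, $f \in \mathcal{LP}$ iff $f(z) = e^{-bz^2} f_1(z)$ with $b \geq 0$ and $f_1$ a real entire function of genus $0$ or $1$ having only real zeros. A polynomial $g$ is even if $g(-z) = g(z)$. *)

theory Defs
  imports "HOL-Analysis.Analysis" "HOL-Computational_Algebra.Polynomial"
begin

definition real_entire :: "(complex \<Rightarrow> complex) \<Rightarrow> bool" where
  "real_entire f \<longleftrightarrow> f holomorphic_on UNIV \<and> (\<forall>x::real. f (complex_of_real x) \<in> \<real>)"

definition E1 :: "complex \<Rightarrow> complex" where
  "E1 w = (1 - w) * exp w"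

text \<open>Genus 0 or 1 (i.e. genus at most 1), for a not identically zero entire function:
  Hadamard-type representation  f(z) = c z^m e^(beta z) prod_n E1(z / a_n)  with
  sum 1/|a_n|^2 finite.  Entries a_n = 0 are allowed as padding (they contribute the
  factor E1 0 = 1 and the term 0 to the sum), so finitely many zeros are covered.\<close>
definition genus_le_1 :: "(complex \<Rightarrow> complex) \<Rightarrow> bool" where
  "genus_le_1 f \<longleftrightarrow> f holomorphic_on UNIV \<and>
     (\<exists>c m \<beta> (a :: nat \<Rightarrow> complex). c \<noteq> 0 \<and>
        summable (\<lambda>n. 1 / (cmod (a n))\<^sup>2) \<and>
        (\<forall>z. f z = c * z ^ m * exp (\<beta> * z) * (\<Prod>n. E1 (z / a n))))"

definition laguerre_polya :: "(complex \<Rightarrow> complex) \<Rightarrow> bool" where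
  "laguerre_polya f \<longleftrightarrow>
     (\<exists>p :: nat \<Rightarrow> complex poly.
        (\<forall>n i. coeff (p n) i \<in> \<real>) \<and>
        (\<forall>n z. poly (p n) z = 0 \<longrightarrow> z \<in> \<real>) \<and>
        (\<forall>K. compact K \<longrightarrow> uniform_limit K (\<lambda>n. poly (p n)) f sequentially))"

end

theory Submission
  imports Defs "HOL-Complex_Analysis.Complex_Analysis" "HOL-Computational_Algebra.Fundamental_Theorem_Algebra"
begin



lemma exp_quad_bound:
  fixes z :: complex
  assumes "norm z \<le> 1 / 2"
  shows "norm (exp z - 1 - z) \<le> norm z ^ 2"
proof (cases "z = 0")
  case False
  have sums: "(\<lambda>k. z ^ (k + 2) /\<^sub>R fact (k + 2)) sums (exp z - (\<Sum>k<2. z ^ k /\<^sub>R fact k))"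
    by (intro sums_split_initial_segment exp_converges)
  have "summable (\<lambda>k. norm z ^ (k + 2) /\<^sub>R fact (k + 2))"
    using summable_norm_exp[of z]
    by (intro summable_norm summable_ignore_initial_segment)
       (auto simp: norm_power norm_divide divide_simps)
  also have "?this \<longleftrightarrow> summable (\<lambda>k. norm z ^ 2 * (norm z ^ k / fact (k + 2)))"
    by (simp add: power_add mult_ac divide_simps power2_eq_square del: of_nat_Suc of_nat_add)
  also have "\<dots> \<longleftrightarrow> summable (\<lambda>k. norm z ^ k / fact (k + 2))"
    by (subst summable_cmult_iff) (use \<open>z \<noteq> 0\<close> in auto)
  finally have summable: "summable (\<lambda>k. norm z ^ k / fact (k + 2))" .
  have "exp z - 1 - z = (\<Sum>k. z ^ (k + 2) / fact (k + 2))"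
    using sums by (simp add: sums_iff scaleR_conv_of_real divide_simps eval_nat_numeral)
  also have "norm \<dots> \<le> (\<Sum>k. norm (z ^ (k + 2) / fact (k + 2)))"
    using summable_norm_exp[of z]
    by (intro summable_norm summable_ignore_initial_segment)
       (auto simp: norm_power norm_divide divide_simps)
  also have "\<dots> = (\<Sum>k. norm z ^ 2 * (norm z ^ k / fact (k + 2)))"
    by (simp add: power_add norm_power norm_divide mult_ac norm_mult power2_eq_square del: of_nat_Suc)
  also have "\<dots> = norm z ^ 2 * (\<Sum>k. norm z ^ k / fact (k + 2))"
    using summable by (rule suminf_mult)
  also have "\<dots> \<le> norm z ^ 2 * (1 / (1 - norm z) / 2)"
  proof (intro mult_left_mono, rule sums_le)
    show "(\<lambda>k. norm z ^ k / fact (k + 2)) sums (\<Sum>k. norm z ^ k / fact (k + 2))"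
      using summable by blast
    show "(\<lambda>k. norm z ^ k / 2) sums (1 / (1 - norm z) / 2)"
      using assms by (intro geometric_sums sums_divide) auto
  next
    fix k :: nat
    have "norm z ^ k / fact (k + 2) \<le> norm z ^ k / fact 2"
      by (intro divide_left_mono fact_mono) auto
    thus "norm z ^ k / fact (k + 2) \<le> norm z ^ k / 2"
      by simp
  qed (auto simp: divide_simps)
  also have "\<dots> \<le> norm z ^ 2 * 1"
    using assms by (intro mult_left_mono) (auto simp: divide_simps)
  finally show ?thesis by simp
qed auto

lemma power_diff_bound:
  fixes a b :: complex
  assumes "norm a \<le> M" "norm b \<le> M" "M \<ge> 1"
  shows "norm (a ^ n - b ^ n) \<le> real n * norm (a - b) * M ^ n"
proof (induction n)
  case 0 then show ?case by simp
next
  case (Suc n)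
  have "a ^ Suc n - b ^ Suc n = a * (a ^ n - b ^ n) + (a - b) * b ^ n"
    by (simp add: algebra_simps)
  hence "norm (a ^ Suc n - b ^ Suc n) \<le> norm a * norm (a ^ n - b ^ n) + norm (a - b) * norm b ^ n"
    by (metis norm_mult norm_power norm_triangle_ineq)
  also have "\<dots> \<le> M * (real n * norm (a - b) * M ^ n) + norm (a - b) * M ^ n"
    using assms Suc by (intro add_mono mult_mono mult_left_mono power_mono) auto
  also have "\<dots> \<le> M * (real n * norm (a - b) * M ^ n) + norm (a - b) * M ^ Suc n"
    using assms by (intro add_left_mono mult_left_mono) (auto intro: power_increasing)
  also have "\<dots> = real (Suc n) * norm (a - b) * M ^ Suc n"
    by (simp add: algebra_simps)
  finally show ?case .
qed

lemma exp_approx: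
  assumes "R > 0" "e > 0"
  shows "\<exists>K0. \<forall>K\<ge>K0. K > 0 \<and> (\<forall>u::complex. norm u \<le> R \<longrightarrow>
            norm ((1 + u / of_nat K) ^ K - exp u) < e)"
proof -
  obtain K0 :: nat where K0: "K0 > max (2 * R) (R^2 * exp R / e)"
    using reals_Archimedean2 by blast
  show ?thesis
  proof (intro exI[of _ K0] allI impI conjI)
    fix K :: nat assume K: "K \<ge> K0"
    have Kpos: "real K > 0" "real K \<ge> 2 * R" "real K > R^2 * exp R / e" using K K0 assms
      by (auto simp: max_def split: if_splits)
    show "K > 0" using Kpos by simp
    fix u :: complex assume u: "norm u \<le> R"
    define w where "w = u / of_nat K"
    define M where "M = exp (R / K)"
    have nw: "norm w \<le> R / K" using u Kpos by (simp add: w_def norm_divide divide_right_mono)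
    have M1: "M \<ge> 1" using assms Kpos by (simp add: M_def)
    have na: "norm (exp w) \<le> M"
      using norm_exp[of w] nw unfolding M_def by (meson exp_le_cancel_iff order_trans)
    have nb: "norm (1 + w) \<le> M"
    proof -
      have "norm (1 + w) \<le> 1 + norm w" by (metis norm_one norm_triangle_ineq)
      also have "\<dots> \<le> exp (norm w)" by (rule exp_ge_add_one_self_aux) simp
      also have "\<dots> \<le> M" using nw by (simp add: M_def)
      finally show ?thesis .
    qed
    have ek: "exp w ^ K = exp u"
      using Kpos by (simp add: w_def flip: exp_of_nat_mult)
    have MK: "M ^ K = exp R"
      using Kpos by (simp add: M_def flip: exp_of_nat_mult)
    have "R / K \<le> 1/2" using Kpos by (simp add: divide_simps)
    hence nw2: "norm w \<le> 1/2" using nw by linarith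
    have "norm ((1 + u / of_nat K) ^ K - exp u) = norm (exp w ^ K - (1 + w) ^ K)"
      using ek unfolding w_def by (simp add: norm_minus_commute)
    also have "\<dots> \<le> real K * norm (exp w - (1 + w)) * M ^ K"
      by (rule power_diff_bound[OF na nb M1])
    also have "\<dots> \<le> real K * (R / K)^2 * exp R"
    proof -
      have "norm (exp w - (1 + w)) \<le> norm w ^ 2"
        using exp_quad_bound[OF nw2] by (simp add: algebra_simps)
      also have "\<dots> \<le> (R / K) ^ 2" using nw by (intro power_mono) auto
      finally show ?thesis unfolding MK by (intro mult_right_mono mult_left_mono) auto
    qed
    also have "\<dots> = R^2 * exp R / K" using Kpos by (simp add: power2_eq_square field_simps)
    also have "\<dots> < e" using Kpos assms by (simp add: field_simps)
    finally show "norm ((1 + u / of_nat K) ^ K - exp u) < e" .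
  qed
qed




definition rpoly :: "complex poly \<Rightarrow> bool" where
  "rpoly p \<longleftrightarrow> (\<forall>i. coeff p i \<in> \<real>) \<and> (\<forall>z. poly p z = 0 \<longrightarrow> z \<in> \<real>)"

definition LPA :: "(complex \<Rightarrow> complex) \<Rightarrow> bool" where
  "LPA F \<longleftrightarrow> (\<forall>R>0. \<forall>e>0. \<exists>p. rpoly p \<and> (\<forall>z\<in>cball 0 R. norm (poly p z - F z) < e))"

lemma rpoly_mult: "rpoly p \<Longrightarrow> rpoly q \<Longrightarrow> rpoly (p * q)"
  unfolding rpoly_def
  by (auto simp: coeff_mult intro!: Reals_mult)

lemma rpoly_power: "rpoly p \<Longrightarrow> rpoly (p ^ n)"
proof (induction n)
  case 0
  then show ?case by (auto simp: rpoly_def coeff_1 )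
next
  case (Suc n)
  then show ?case using rpoly_mult by simp
qed

lemma rpoly_linear:
  assumes "a \<in> \<real>" "b \<in> \<real>" "a \<noteq> 0"
  shows "rpoly [:a, b:]"
  unfolding rpoly_def
proof safe
  fix i show "coeff [:a, b:] i \<in> \<real>" using assms by (cases i) (auto simp: coeff_pCons split: nat.splits)
next
  fix z assume "poly [:a, b:] z = 0"
  hence "a + b * z = 0" by (simp add: mult.commute)
  hence bz: "b * z = - a" using add_eq_0_iff[of a "b*z"] by simp
  hence "b \<noteq> 0" using assms by auto
  hence "z = - a / b" using bz by (simp add: field_simps)
  thus "z \<in> \<real>" using assms by auto
qed

lemma LPA_poly: "rpoly p \<Longrightarrow> LPA (poly p)"
  unfolding LPA_def by (intro allI impI exI[of _ p]) auto

lemma cont_bound: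
  fixes F :: "complex \<Rightarrow> complex"
  assumes "continuous_on UNIV F"
  shows "\<exists>B>0. \<forall>z\<in>cball 0 R. norm (F z) \<le> B"
proof -
  have "continuous_on (cball 0 R) F" using assms continuous_on_subset by blast
  hence "compact (F ` cball 0 R)"
    by (intro compact_continuous_image compact_cball)
  then obtain B where "B > 0" "\<forall>x\<in>F ` cball 0 R. norm x \<le> B"
    using compact_imp_bounded bounded_pos by metis
  thus ?thesis by auto
qed

lemma LPA_mult:
  assumes "LPA F" "LPA G" "continuous_on UNIV F" "continuous_on UNIV G"
  shows "LPA (\<lambda>z. F z * G z)"
  unfolding LPA_def
proof (intro allI impI)
  fix R e :: real assume R: "R > 0" and e: "e > 0"
  obtain B1 where B1: "B1 > 0" "\<forall>z\<in>cball 0 R. norm (F z) \<le> B1" using cont_bound[OF assms(3)] by blast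
  obtain B2 where B2: "B2 > 0" "\<forall>z\<in>cball 0 R. norm (G z) \<le> B2" using cont_bound[OF assms(4)] by blast
  define B where "B = B1 + B2"
  have B: "B > 0" "\<forall>z\<in>cball 0 R. norm (F z) \<le> B" "\<forall>z\<in>cball 0 R. norm (G z) \<le> B"
    using B1 B2 by (auto simp: B_def)
  define d where "d = min 1 (e / (2 * B + 1))"
  have d: "d > 0" "d \<le> 1"
    using e B by (auto simp: d_def)
  have "d \<le> e / (2 * B + 1)" by (simp add: d_def)
  hence d3: "(2 * B + 1) * d \<le> e" using B by (simp add: field_simps)
  obtain p where p: "rpoly p" "\<forall>z\<in>cball 0 R. norm (poly p z - F z) < d"
    using assms(1) R d unfolding LPA_def by blast
  obtain q where q: "rpoly q" "\<forall>z\<in>cball 0 R. norm (poly q z - G z) < d"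
    using assms(2) R d unfolding LPA_def by blast
  show "\<exists>p. rpoly p \<and> (\<forall>z\<in>cball 0 R. norm (poly p z - F z * G z) < e)"
  proof (intro exI[of _ "p * q"] conjI ballI)
    show "rpoly (p * q)" using p q rpoly_mult by blast
    fix z :: complex assume z: "z \<in> cball 0 R"
    have np: "norm (poly p z) \<le> B + 1"
    proof -
      have "norm (poly p z) \<le> norm (F z) + norm (poly p z - F z)"
        by (metis add.commute diff_add_cancel norm_triangle_ineq)
      thus ?thesis using B z p d by fastforce
    qed
    have "poly (p * q) z - F z * G z = poly p z * (poly q z - G z) + G z * (poly p z - F z)"
      by (simp add: algebra_simps)
    hence "norm (poly (p * q) z - F z * G z) \<le> norm (poly p z) * norm (poly q z - G z) + norm (G z) * norm (poly p z - F z)"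
      by (metis norm_mult norm_triangle_ineq)
    also have "\<dots> \<le> (B + 1) * d + B * d"
      using np q z B p
      by (intro add_mono mult_mono) (auto intro: less_imp_le)
    also have "\<dots> = (2 * B + 1) * d" by (simp add: algebra_simps)
    also have "\<dots> \<le> e" using d3 by simp
    finally have le: "norm (poly (p * q) z - F z * G z) \<le> e" .
    have "norm (G z) * norm (poly p z - F z) \<le> B * d"
      using B z p by (intro mult_mono) (auto intro: less_imp_le)
    have "norm (poly p z) * norm (poly q z - G z) < (B + 1) * d"
    proof (cases "poly p z = 0")
      case True then show ?thesis using B d by simp
    next
      case False
      hence "norm (poly p z) * norm (poly q z - G z) < norm (poly p z) * d"
        using q z by (intro mult_strict_left_mono) auto
      also have "\<dots> \<le> (B + 1) * d" using np d by (intro mult_right_mono) auto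
      finally show ?thesis .
    qed
    hence "norm (poly (p * q) z - F z * G z) < (B + 1) * d + B * d"
      using \<open>norm (G z) * norm (poly p z - F z) \<le> B * d\<close>
        \<open>poly (p * q) z - F z * G z = _\<close>
      by (smt (verit) norm_mult norm_triangle_ineq)
    thus "norm (poly (p * q) z - F z * G z) < e"
      using d3 by (simp add: algebra_simps)
  qed
qed

lemma LPA_limit:
  fixes F :: "complex \<Rightarrow> complex"
  assumes "\<And>R e. R > 0 \<Longrightarrow> e > 0 \<Longrightarrow> \<exists>G. LPA G \<and> (\<forall>z\<in>cball 0 R. norm (G z - F z) < e)"
  shows "LPA F"
  unfolding LPA_def
proof (intro allI impI)
  fix R e :: real assume R: "R > 0" and e: "e > 0"
  obtain G where G: "LPA G" "\<forall>z\<in>cball 0 R. norm (G z - F z) < e / 2"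
    using assms[OF R, of "e/2"] e by auto
  obtain p where p: "rpoly p" "\<forall>z\<in>cball 0 R. norm (poly p z - G z) < e / 2"
    using G(1) R e unfolding LPA_def by (meson half_gt_zero)
  show "\<exists>p. rpoly p \<and> (\<forall>z\<in>cball 0 R. norm (poly p z - F z) < e)"
  proof (intro exI[of _ p] conjI ballI)
    fix z :: complex assume z: "z \<in> cball 0 R"
    have "norm (poly p z - F z) \<le> norm (poly p z - G z) + norm (G z - F z)"
      by (metis diff_add_cancel add_diff_eq norm_triangle_ineq)
    moreover have "norm (poly p z - G z) < e / 2" using p z by auto
    moreover have "norm (G z - F z) < e / 2" using G z by auto
    ultimately show "norm (poly p z - F z) < e" by linarith
  qed (use p in auto)
qed

lemma LPA_exp_lin:
  assumes "\<gamma> \<in> \<real>"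
  shows "LPA (\<lambda>z. exp (\<gamma> * z))"
  unfolding LPA_def
proof (intro allI impI)
  fix R e :: real assume R: "R > 0" and e: "e > 0"
  obtain K0 where K0: "\<forall>K\<ge>K0. K > 0 \<and> (\<forall>u::complex. norm u \<le> norm \<gamma> * R + 1 \<longrightarrow>
            norm ((1 + u / of_nat K) ^ K - exp u) < e)"
    using exp_approx[of "norm \<gamma> * R + 1" e] R e assms by (metis add_nonneg_pos mult_nonneg_nonneg norm_ge_zero zero_le_power2 zero_less_one less_imp_le)
  define K where "K = K0"
  have K: "K > 0" "\<And>u::complex. norm u \<le> norm \<gamma> * R + 1 \<Longrightarrow> norm ((1 + u / of_nat K) ^ K - exp u) < e"
    using K0 unfolding K_def by simp_all
  show "\<exists>p. rpoly p \<and> (\<forall>z\<in>cball 0 R. norm (poly p z - exp (\<gamma> * z)) < e)"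
  proof (intro exI[of _ "[:1, \<gamma> / of_nat K:] ^ K"] conjI ballI)
    show "rpoly ([:1, \<gamma> / of_nat K:] ^ K)"
      by (intro rpoly_power rpoly_linear) (use assms in auto)
    fix z :: complex assume z: "z \<in> cball 0 R"
    have "norm (\<gamma> * z) \<le> norm \<gamma> * R + 1"
      using z mult_left_mono[of "norm z" R "norm \<gamma>"] by (simp add: norm_mult)
    from K(2)[OF this] show "norm (poly ([:1, \<gamma> / of_nat K:] ^ K) z - exp (\<gamma> * z)) < e"
      by (simp add: poly_power mult_ac)
  qed
qed

lemma LPA_exp_quad:
  assumes "b \<ge> 0"
  shows "LPA (\<lambda>z. exp (- complex_of_real b * z\<^sup>2))"
  unfolding LPA_def
proof (intro allI impI)
  fix R e :: real assume R: "R > 0" and e: "e > 0"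
  obtain K0 where K0: "\<forall>K\<ge>K0. K > 0 \<and> (\<forall>u::complex. norm u \<le> b * R^2 + 1 \<longrightarrow>
            norm ((1 + u / of_nat K) ^ K - exp u) < e)"
    using exp_approx[of "b * R^2 + 1" e] R e assms by (metis add_nonneg_pos mult_nonneg_nonneg norm_ge_zero zero_le_power2 zero_less_one less_imp_le)
  define K where "K = K0"
  have K: "K > 0" "\<And>u::complex. norm u \<le> b * R^2 + 1 \<Longrightarrow> norm ((1 + u / of_nat K) ^ K - exp u) < e"
    using K0 unfolding K_def by simp_all
  define s where "s = complex_of_real (sqrt (b / K))"
  have s2: "s * s = complex_of_real b / of_nat K"
    using assms by (simp add: s_def flip: of_real_mult)
  show "\<exists>p. rpoly p \<and> (\<forall>z\<in>cball 0 R. norm (poly p z - exp (- complex_of_real b * z\<^sup>2)) < e)"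
  proof (intro exI[of _ "([:1, s:] * [:1, -s:]) ^ K"] conjI ballI)
    show "rpoly (([:1, s:] * [:1, -s:]) ^ K)"
      by (intro rpoly_power rpoly_mult rpoly_linear) (auto simp: s_def)
    fix z :: complex assume z: "z \<in> cball 0 R"
    have "norm (- complex_of_real b * z\<^sup>2) \<le> b * R^2 + 1"
      using z assms mult_left_mono[of "norm z ^ 2" "R^2" b] power_mono[of "norm z" R 2] by (simp add: norm_mult norm_power)
    from K(2)[OF this]
    have "norm ((1 + - complex_of_real b * z\<^sup>2 / of_nat K) ^ K - exp (- complex_of_real b * z\<^sup>2)) < e" .
    moreover have "poly (([:1, s:] * [:1, -s:]) ^ K) z = (1 + - complex_of_real b * z\<^sup>2 / of_nat K) ^ K"
    proof -
      have e0: "poly ([:1, s:] * [:1, -s:]) z = (1 + s * z) * (1 - s * z)" by (simp add: algebra_simps)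
      have e1: "(1 + s * z) * (1 - s * z) = 1 - (s * s) * z^2" by (simp add: algebra_simps power2_eq_square)
      have e2: "1 - (s * s) * z^2 = 1 + - complex_of_real b * z\<^sup>2 / of_nat K" unfolding s2 by simp
      show ?thesis unfolding poly_power e0 e1 e2 ..
    qed
    ultimately show "norm (poly (([:1, s:] * [:1, -s:]) ^ K) z - exp (- complex_of_real b * z\<^sup>2)) < e"
      by simp
  qed
qed

lemma LPA_imp_LP:
  assumes "LPA F"
  shows "laguerre_polya F"
proof -
  have "\<forall>n::nat. \<exists>p. rpoly p \<and> (\<forall>z\<in>cball 0 (real n + 1). norm (poly p z - F z) < 1 / (real n + 1))"
  proof
    fix n :: nat
    have "real n + 1 > 0" "1 / (real n + 1) > 0" by auto
    thus "\<exists>p. rpoly p \<and> (\<forall>z\<in>cball 0 (real n + 1). norm (poly p z - F z) < 1 / (real n + 1))"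
      using assms unfolding LPA_def by blast
  qed
  from choice[OF this] obtain p where p0: "\<forall>n. rpoly (p n) \<and> (\<forall>z\<in>cball 0 (real n + 1). norm (poly (p n) z - F z) < 1 / (real n + 1))"
    by blast
  have p: "\<And>n. rpoly (p n)"
      "\<And>n z. z \<in> cball 0 (real n + 1) \<Longrightarrow> norm (poly (p n) z - F z) < 1 / (real n + 1)"
    using p0 by auto
  show ?thesis unfolding laguerre_polya_def
  proof (intro exI[of _ p] conjI allI impI)
    show "coeff (p n) i \<in> \<real>" for n i using p(1) by (simp add: rpoly_def)
    show "poly (p n) z = 0 \<Longrightarrow> z \<in> \<real>" for n z using p(1) by (simp add: rpoly_def)
    fix K :: "complex set" assume "compact K"
    hence "bounded K" by (rule compact_imp_bounded)
    then obtain R0 where R0: "\<forall>x\<in>K. norm x \<le> R0" unfolding bounded_pos by blast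
    show "uniform_limit K (\<lambda>n. poly (p n)) F sequentially"
    proof (rule uniform_limitI)
      fix e :: real assume e: "e > 0"
      obtain N :: nat where N: "real N > max R0 (1 / e)" using reals_Archimedean2 by blast
      show "\<forall>\<^sub>F n in sequentially. \<forall>x\<in>K. dist (poly (p n) x) (F x) < e"
      proof (rule eventually_sequentiallyI[of N], intro ballI)
        fix n x assume n: "N \<le> n" and x: "x \<in> K"
        have "norm x \<le> R0" using x R0 by blast
        moreover have "R0 < real N" using N by simp
        moreover have "real N \<le> real n" using n by simp
        ultimately have "x \<in> cball 0 (real n + 1)" by simp
        hence "norm (poly (p n) x - F x) < 1 / (real n + 1)" by (rule p(2))
        also have "\<dots> \<le> e"
        proof -
          have "1 / e < real N" using N by simp
          moreover have "real N \<le> real n" using n by simp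
          ultimately have "1 / e < real n + 1" by linarith
          thus ?thesis using e by (simp add: field_simps)
        qed
        finally show "dist (poly (p n) x) (F x) < e" by (simp add: dist_norm)
      qed
    qed
  qed
qed




definition nnc :: "complex poly \<Rightarrow> bool" where
  "nnc P \<longleftrightarrow> (\<forall>i. Im (coeff P i) = 0 \<and> Re (coeff P i) \<ge> 0)"

lemma nnc_mult:
  assumes "nnc p" "nnc q" shows "nnc (p * q)"
  unfolding nnc_def
proof
  fix n
  have "Im (coeff (p * q) n) = (\<Sum>i\<le>n. Im (coeff p i * coeff q (n - i)))"
    by (simp add: coeff_mult Im_sum)
  also have "\<dots> = 0" using assms by (simp add: nnc_def)
  finally have 1: "Im (coeff (p * q) n) = 0" .
  have "Re (coeff (p * q) n) = (\<Sum>i\<le>n. Re (coeff p i * coeff q (n - i)))"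
    by (simp add: coeff_mult Re_sum)
  also have "\<dots> \<ge> 0" using assms by (auto simp: nnc_def intro!: sum_nonneg)
  finally show "Im (coeff (p * q) n) = 0 \<and> Re (coeff (p * q) n) \<ge> 0" using 1 by simp
qed

lemma nnc_1: "nnc 1"
  by (simp add: nnc_def coeff_1)

lemma nnc_prod_list: "(\<And>p. p \<in> set ps \<Longrightarrow> nnc p) \<Longrightarrow> nnc (prod_list ps)"
  by (induction ps) (auto intro: nnc_mult nnc_1)

lemma nnc_sum: "(\<And>i. i \<in> A \<Longrightarrow> nnc (f i)) \<Longrightarrow> nnc (\<Sum>i\<in>A. f i)"
  unfolding nnc_def by (simp add: coeff_sum Im_sum Re_sum sum_nonneg)

lemma nnc_monom: "Im c = 0 \<Longrightarrow> Re c \<ge> 0 \<Longrightarrow> nnc (monom c n)"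
  unfolding nnc_def by (simp add: coeff_monom)

lemma nnc_smult: "Im c = 0 \<Longrightarrow> Re c \<ge> 0 \<Longrightarrow> nnc p \<Longrightarrow> nnc (smult c p)"
  unfolding nnc_def by simp

lemma poly_prod_list_map: "poly (\<Prod>a\<leftarrow>l. f a) t = (\<Prod>a\<leftarrow>l. poly (f a) t)"
  by (induction l) auto

lemma prod_list_map_mult: "(\<Prod>a\<leftarrow>l. f a * g a) = (\<Prod>a\<leftarrow>l. f a) * (\<Prod>a\<leftarrow>l. (g a :: 'b :: comm_monoid_mult))"
  by (induction l) (auto simp: mult_ac)

lemma prod_list_const: "(\<Prod>a\<leftarrow>l. c) = (c :: 'b :: comm_monoid_mult) ^ length l"
  by (induction l) auto

lemma even_poly_odd_coeff:
  fixes g :: "complex poly"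
  assumes "\<And>z. poly g (- z) = poly g z" "odd l"
  shows "coeff g l = 0"
proof -
  have "poly (g \<circ>\<^sub>p [:0, -1:]) = poly g"
    by (rule ext) (simp add: poly_pcompose assms(1))
  hence "g \<circ>\<^sub>p [:0, -1:] = g" by (simp add: poly_eq_poly_eq_iff)
  hence "(-1) ^ l * coeff g l = coeff g l" by (metis coeff_pcompose_linear)
  thus ?thesis using assms(2) by simp
qed

lemma prod_lin_monic:
  "degree (\<Prod>a\<leftarrow>l. [:a, 1::complex:]) = length l \<and> lead_coeff (\<Prod>a\<leftarrow>l. [:a, 1::complex:]) = 1"
proof (induction l)
  case Nil then show ?case by simp
next
  case (Cons a l)
  have nz: "(\<Prod>a\<leftarrow>l. [:a, 1::complex:]) \<noteq> 0" using Cons by auto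
  have d: "degree ([:a, 1:] * (\<Prod>a\<leftarrow>l. [:a, 1::complex:])) = 1 + length l"
    using nz Cons by (subst degree_mult_eq) auto
  have lm: "lead_coeff ([:a, 1:] * (\<Prod>a\<leftarrow>l. [:a, 1::complex:])) = lead_coeff [:a, 1::complex:] * lead_coeff (\<Prod>a\<leftarrow>l. [:a, 1::complex:])"
    by (rule lead_coeff_mult)
  have lc1: "lead_coeff [:a, 1::complex:] = 1" by simp
  have "lead_coeff ([:a, 1:] * (\<Prod>a\<leftarrow>l. [:a, 1::complex:])) = 1"
    using lm lc1 Cons.IH by (metis mult_1)
  with d show ?case by simp
qed

lemma prod_lin_scale:
  assumes "t \<noteq> 0"
  shows "(\<Prod>a\<leftarrow>l. y + a * t) = t ^ length l * (\<Prod>a\<leftarrow>l. y / t + (a::complex))"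
  using assms by (induction l) (auto simp: field_simps)

lemma G_nnc:
  fixes g :: "complex poly" and \<alpha>s :: "complex list" and y :: real
  assumes g_prod: "g = (\<Prod>a\<leftarrow>\<alpha>s. [:a, 1:])"
    and g_even: "\<And>z. poly g (- z) = poly g z"
    and g_coeffs: "\<And>l. \<exists>c::real. c \<ge> 0 \<and> coeff g l = complex_of_real c"
  shows "nnc (\<Prod>a\<leftarrow>\<alpha>s. [:complex_of_real y, a:])"
proof -
  define M where "M = length \<alpha>s"
  have degg: "degree g = M" and lcg: "coeff g M = 1"
    using prod_lin_monic[of \<alpha>s] unfolding g_prod M_def by auto
  define H where "H = (\<Sum>l\<le>M. monom (coeff g l * complex_of_real y ^ l) (M - l))"
  have nH: "nnc H" unfolding H_def
  proof (intro nnc_sum nnc_monom)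
    fix l
    obtain c where c: "c \<ge> 0" "coeff g l = complex_of_real c" using g_coeffs by blast
    show "Im (coeff g l * complex_of_real y ^ l) = 0"
      using c by (simp flip: of_real_power of_real_mult)
    show "Re (coeff g l * complex_of_real y ^ l) \<ge> 0"
    proof (cases "even l")
      case True
      hence "y ^ l \<ge> 0" by (simp add: zero_le_even_power)
      thus ?thesis using c by (simp flip: of_real_power of_real_mult)
    next
      case False
      thus ?thesis using even_poly_odd_coeff[OF g_even, of l] by simp
    qed
  qed
  have "poly (\<Prod>a\<leftarrow>\<alpha>s. [:complex_of_real y, a:]) t = poly H t" for t
  proof -
    have lhs: "poly (\<Prod>a\<leftarrow>\<alpha>s. [:complex_of_real y, a:]) t = (\<Prod>a\<leftarrow>\<alpha>s. complex_of_real y + a * t)"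
      by (simp add: poly_prod_list_map mult.commute)
    have rhs: "poly H t = (\<Sum>l\<le>M. coeff g l * complex_of_real y ^ l * t ^ (M - l))"
      by (simp add: H_def poly_sum poly_monom)
    show ?thesis
    proof (cases "t = 0")
      case True
      have "poly H t = (\<Sum>l\<le>M. coeff g l * complex_of_real y ^ l * t ^ (M - l))" by (rule rhs)
      also have "\<dots> = (\<Sum>l\<le>M. if l = M then coeff g l * complex_of_real y ^ l else 0)"
        using True by (intro sum.cong) auto
      also have "\<dots> = complex_of_real y ^ M" using lcg by simp
      finally have "poly H t = complex_of_real y ^ M" .
      moreover have "poly (\<Prod>a\<leftarrow>\<alpha>s. [:complex_of_real y, a:]) t = complex_of_real y ^ M"
        using lhs True by (simp add: prod_list_const M_def)
      ultimately show ?thesis by simp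
    next
      case False
      have "(\<Prod>a\<leftarrow>\<alpha>s. complex_of_real y + a * t) = t ^ M * poly g (complex_of_real y / t)"
        using prod_lin_scale[OF False, of "complex_of_real y" \<alpha>s]
        by (simp add: g_prod poly_prod_list_map M_def add.commute)
      also have "poly g (complex_of_real y / t) = (\<Sum>l\<le>M. coeff g l * (complex_of_real y / t) ^ l)"
        by (simp add: poly_altdef degg)
      also have "t ^ M * \<dots> = (\<Sum>l\<le>M. coeff g l * complex_of_real y ^ l * t ^ (M - l))"
        unfolding sum_distrib_left
      proof (intro sum.cong refl)
        fix l assume "l \<in> {..M}"
        hence "t ^ M = t ^ l * t ^ (M - l)" by (simp flip: power_add)
        thus "t ^ M * (coeff g l * (complex_of_real y / t) ^ l) = coeff g l * complex_of_real y ^ l * t ^ (M - l)"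
          using False by (simp add: field_simps power_divide)
      qed
      finally show ?thesis unfolding lhs rhs .
    qed
  qed
  hence "(\<Prod>a\<leftarrow>\<alpha>s. [:complex_of_real y, a:]) = H"
    by (intro poly_eq_poly_eq_iff[THEN iffD1] ext)
  thus ?thesis using nH by simp
qed




lemma const_pow: "[:c:] ^ n = smult (c ^ n) (1 :: 'a :: comm_ring_1 poly)"
  by (induction n) simp_all

lemma PP_nnc_aux:
  fixes g :: "complex poly" and \<alpha>s :: "complex list" and x :: real
  assumes g_prod: "g = (\<Prod>a\<leftarrow>\<alpha>s. [:a, 1:])"
    and g_even: "\<And>z. poly g (- z) = poly g z"
    and g_coeffs: "\<And>l. \<exists>c::real. c \<ge> 0 \<and> coeff g l = complex_of_real c"
  shows "degree Q = n \<Longrightarrow> Q \<noteq> 0 \<Longrightarrow> (\<forall>z. poly Q z = 0 \<longrightarrow> z \<in> \<real>) \<Longrightarrow>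
     \<exists>P. nnc P \<and> (\<Prod>a\<leftarrow>\<alpha>s. Q \<circ>\<^sub>p [:complex_of_real x, a:]) = smult (lead_coeff Q ^ length \<alpha>s) P"
proof (induction n arbitrary: Q)
  case 0
  define c where "c = coeff Q 0"
  have Q: "Q = [:c:]" using degree_0_id[OF 0(1)] by (simp add: c_def)
  have "(\<Prod>a\<leftarrow>\<alpha>s. Q \<circ>\<^sub>p [:complex_of_real x, a:]) = (\<Prod>a\<leftarrow>\<alpha>s. [:c:])"
    unfolding Q by simp
  also have "\<dots> = [:c:] ^ length \<alpha>s" by (rule prod_list_const)
  also have "\<dots> = smult (lead_coeff Q ^ length \<alpha>s) 1" unfolding Q
    by (simp add: const_pow)
  finally show ?case using nnc_1 by blast
next
  case (Suc n)
  have "\<not> constant (poly Q)" by (simp add: constant_degree Suc.prems)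
  then obtain r where r: "poly Q r = 0" using fundamental_theorem_of_algebra by blast
  have rR: "r \<in> \<real>" using Suc.prems r by blast
  obtain Q' where Q: "Q = [:-r, 1:] * Q'" using r by (metis poly_eq_0_iff_dvd dvdE)
  have Q'nz: "Q' \<noteq> 0" using Suc.prems Q by auto
  have "degree Q = 1 + degree Q'" unfolding Q using Q'nz by (subst degree_mult_eq) auto
  hence dQ': "degree Q' = n" using Suc.prems by simp
  have rQ': "\<forall>z. poly Q' z = 0 \<longrightarrow> z \<in> \<real>" using Suc.prems(3) Q by auto
  have lc: "lead_coeff Q = lead_coeff Q'" unfolding Q lead_coeff_mult by simp
  obtain P' where P': "nnc P'" "(\<Prod>a\<leftarrow>\<alpha>s. Q' \<circ>\<^sub>p [:complex_of_real x, a:]) = smult (lead_coeff Q' ^ length \<alpha>s) P'"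
    using Suc.IH[OF dQ' Q'nz rQ'] by blast
  define y where "y = x - Re r"
  have lin: "[:-r, 1:] \<circ>\<^sub>p [:complex_of_real x, a:] = [:complex_of_real y, a:]" for a
    using rR by (simp add: y_def pcompose_pCons complex_is_Real_iff)
  have "(\<Prod>a\<leftarrow>\<alpha>s. Q \<circ>\<^sub>p [:complex_of_real x, a:]) =
        (\<Prod>a\<leftarrow>\<alpha>s. [:complex_of_real y, a:] * (Q' \<circ>\<^sub>p [:complex_of_real x, a:]))"
    unfolding Q pcompose_mult lin ..
  also have "\<dots> = (\<Prod>a\<leftarrow>\<alpha>s. [:complex_of_real y, a:]) * (\<Prod>a\<leftarrow>\<alpha>s. Q' \<circ>\<^sub>p [:complex_of_real x, a:])"
    by (rule prod_list_map_mult)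
  also have "\<dots> = smult (lead_coeff Q ^ length \<alpha>s) ((\<Prod>a\<leftarrow>\<alpha>s. [:complex_of_real y, a:]) * P')"
    unfolding P'(2) lc by simp
  finally show ?case
    using nnc_mult[OF G_nnc[OF g_prod g_even g_coeffs] P'(1)] by blast
qed

lemma length_even:
  fixes g :: "complex poly" and \<alpha>s :: "complex list"
  assumes g_prod: "g = (\<Prod>a\<leftarrow>\<alpha>s. [:a, 1:])"
    and g_even: "\<And>z. poly g (- z) = poly g z"
  shows "even (length \<alpha>s)"
proof (rule ccontr)
  assume "odd (length \<alpha>s)"
  hence "coeff g (length \<alpha>s) = 0" by (rule even_poly_odd_coeff[OF g_even])
  moreover have "coeff g (length \<alpha>s) = 1"
    using prod_lin_monic[of \<alpha>s] unfolding g_prod by metis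
  ultimately show False by simp
qed

lemma PP_nnc:
  fixes g :: "complex poly" and \<alpha>s :: "complex list" and x :: real
  assumes g_prod: "g = (\<Prod>a\<leftarrow>\<alpha>s. [:a, 1:])"
    and g_even: "\<And>z. poly g (- z) = poly g z"
    and g_coeffs: "\<And>l. \<exists>c::real. c \<ge> 0 \<and> coeff g l = complex_of_real c"
    and Q: "\<And>i. coeff Q i \<in> \<real>" "\<And>z. poly Q z = 0 \<Longrightarrow> z \<in> \<real>"
  shows "nnc (\<Prod>a\<leftarrow>\<alpha>s. Q \<circ>\<^sub>p [:complex_of_real x, a:])"
proof -
  have Qnz: "Q \<noteq> 0"
  proof
    assume "Q = 0"
    hence "poly Q \<i> = 0" by simp
    hence "\<i> \<in> \<real>" by (rule Q(2))
    thus False by (simp add: complex_is_Real_iff)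
  qed
  obtain P where P: "nnc P" "(\<Prod>a\<leftarrow>\<alpha>s. Q \<circ>\<^sub>p [:complex_of_real x, a:]) = smult (lead_coeff Q ^ length \<alpha>s) P"
    using PP_nnc_aux[OF g_prod g_even g_coeffs refl Qnz] Q(2) by blast
  obtain c where c: "lead_coeff Q = complex_of_real c" using Q(1) by (metis Reals_cases)
  have ev: "even (length \<alpha>s)" by (rule length_even[OF g_prod g_even])
  have "c ^ length \<alpha>s \<ge> 0" using ev by (simp add: zero_le_even_power)
  hence "Im (lead_coeff Q ^ length \<alpha>s) = 0 \<and> Re (lead_coeff Q ^ length \<alpha>s) \<ge> 0"
    unfolding c by (simp flip: of_real_power)
  thus ?thesis unfolding P(2) using P(1) nnc_smult by blast
qed

lemma higher_deriv_poly: "(deriv ^^ k) (poly P) = poly ((pderiv ^^ k) P)"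
proof (induction k)
  case 0 then show ?case by simp
next
  case (Suc k)
  have "(deriv ^^ Suc k) (poly P) = deriv (poly ((pderiv ^^ k) P))" by (simp add: Suc)
  also have "\<dots> = poly (pderiv ((pderiv ^^ k) P))"
    by (rule ext, rule DERIV_imp_deriv, rule poly_DERIV)
  finally show ?case by simp
qed

lemma taylor_coeff_poly: "(deriv ^^ k) (poly P) 0 / fact k = coeff P k"
  by (simp add: higher_deriv_poly poly_0_coeff_0 coeff_higher_pderiv flip: pochhammer_fact)




lemma hol_prod_list: "(\<And>a. a \<in> set l \<Longrightarrow> h a holomorphic_on S) \<Longrightarrow> (\<lambda>t. \<Prod>a\<leftarrow>l. h a t) holomorphic_on S"
  by (induction l) (auto intro!: holomorphic_on_mult)

lemma cont_prod_list: "(\<And>a. a \<in> set l \<Longrightarrow> continuous_on S (h a)) \<Longrightarrow> continuous_on S (\<lambda>t. \<Prod>a\<leftarrow>l. (h a t :: complex))"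
  by (induction l) (auto intro!: continuous_on_mult)

lemma UL_factor:
  fixes F :: "nat \<Rightarrow> complex \<Rightarrow> complex" and f :: "complex \<Rightarrow> complex"
  assumes "\<And>K. compact K \<Longrightarrow> uniform_limit K F f sequentially"
  shows "uniform_limit (cball 0 1) (\<lambda>n t. F n (x + a * t)) (\<lambda>t. f (x + a * t)) sequentially"
proof (rule uniform_limitI)
  fix e :: real assume e: "e > 0"
  define K where "K = (\<lambda>t. x + a * t) ` cball 0 1"
  have "compact K" unfolding K_def
    by (intro compact_continuous_image compact_cball continuous_intros)
  from uniform_limitD[OF assms[OF this] e]
  have ev: "\<forall>\<^sub>F n in sequentially. \<forall>y\<in>K. dist (F n y) (f y) < e" .
  show "\<forall>\<^sub>F n in sequentially. \<forall>t\<in>cball 0 1. dist (F n (x + a * t)) (f (x + a * t)) < e"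
    by (rule eventually_mono[OF ev]) (auto simp: K_def)
qed

lemma UL_list:
  fixes F :: "nat \<Rightarrow> complex \<Rightarrow> complex" and f :: "complex \<Rightarrow> complex"
  assumes "\<And>K. compact K \<Longrightarrow> uniform_limit K F f sequentially" "continuous_on UNIV f"
  shows "uniform_limit (cball 0 1) (\<lambda>n t. \<Prod>a\<leftarrow>l. F n (x + a * t)) (\<lambda>t. \<Prod>a\<leftarrow>l. f (x + a * t)) sequentially"
proof (induction l)
  case Nil
  then show ?case by (simp add: uniform_limit_const)
next
  case (Cons a l)
  have c1: "continuous_on (cball 0 1) (\<lambda>t. f (x + a * t))"
    by (rule continuous_on_compose2[OF assms(2)]) (auto intro!: continuous_intros)
  have c2: "continuous_on (cball 0 1) (\<lambda>t. \<Prod>a\<leftarrow>l. f (x + a * t))"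
    by (intro cont_prod_list continuous_on_compose2[OF assms(2)]) (auto intro!: continuous_intros)
  have b1: "bounded ((\<lambda>t. f (x + a * t)) ` cball 0 1)"
    by (intro compact_imp_bounded compact_continuous_image c1 compact_cball)
  have b2: "bounded ((\<lambda>t. \<Prod>a\<leftarrow>l. f (x + a * t)) ` cball 0 1)"
    by (intro compact_imp_bounded compact_continuous_image c2 compact_cball)
  show ?case
    using uniform_lim_mult[OF UL_factor[OF assms(1)] Cons b1 b2] by simp
qed

lemma LP_imp_coeffs:
  fixes f :: "complex \<Rightarrow> complex" and g :: "complex poly" and \<alpha>s :: "complex list"
  assumes g_prod: "g = (\<Prod>a\<leftarrow>\<alpha>s. [:a, 1:])"
    and g_even: "\<And>z. poly g (- z) = poly g z"
    and g_coeffs: "\<And>l. \<exists>c::real. c \<ge> 0 \<and> coeff g l = complex_of_real c"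
    and LP: "laguerre_polya f"
    and fc: "continuous_on UNIV f"
  shows "Im ((deriv ^^ k) (\<lambda>t. \<Prod>a\<leftarrow>\<alpha>s. f (complex_of_real x + a * t)) 0 / fact k) = 0 \<and>
         Re ((deriv ^^ k) (\<lambda>t. \<Prod>a\<leftarrow>\<alpha>s. f (complex_of_real x + a * t)) 0 / fact k) \<ge> 0"
proof -
  obtain p where p: "\<And>n i. coeff (p n) i \<in> \<real>" "\<And>n z. poly (p n) z = 0 \<Longrightarrow> z \<in> \<real>"
      "\<And>K. compact K \<Longrightarrow> uniform_limit K (\<lambda>n. poly (p n)) f sequentially"
    using LP unfolding laguerre_polya_def by blast
  define \<Phi> where "\<Phi> = (\<lambda>t. \<Prod>a\<leftarrow>\<alpha>s. f (complex_of_real x + a * t))"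
  define A where "A = (deriv ^^ k) \<Phi> 0 / fact k"
  define Pn where "Pn n = (\<Prod>a\<leftarrow>\<alpha>s. p n \<circ>\<^sub>p [:complex_of_real x, a:])" for n
  have eq: "(\<lambda>t. \<Prod>a\<leftarrow>\<alpha>s. poly (p n) (complex_of_real x + a * t)) = poly (Pn n)" for n
    by (rule ext) (simp add: Pn_def poly_prod_list_map poly_pcompose mult.commute)
  have "uniform_limit (cball 0 1) (\<lambda>n t. \<Prod>a\<leftarrow>\<alpha>s. poly (p n) (complex_of_real x + a * t)) \<Phi> sequentially"
    unfolding \<Phi>_def by (rule UL_list[OF p(3) fc])
  hence "uniform_limit (cball 0 1) (\<lambda>n. poly (Pn n)) \<Phi> sequentially"
    unfolding eq .
  hence ul: "uniform_limit (ball 0 1) (\<lambda>n. poly (Pn n)) \<Phi> sequentially"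
    by (rule uniform_limit_on_subset) auto
  have lim: "(\<lambda>n. (deriv ^^ k) (poly (Pn n)) 0) \<longlonglongrightarrow> (deriv ^^ k) \<Phi> 0"
  proof (rule higher_deriv_complex_uniform_limit[OF ul])
    have "poly (Pn n) holomorphic_on ball 0 1" for n
      using poly_holomorphic_on[of "\<lambda>z. z" "ball 0 1" "Pn n"] by (simp add: holomorphic_on_id)
    thus "\<forall>\<^sub>F n in sequentially. poly (Pn n) holomorphic_on ball 0 1" by simp
  qed auto
  hence "(\<lambda>n. (deriv ^^ k) (poly (Pn n)) 0 / fact k) \<longlonglongrightarrow> A"
    unfolding A_def by (intro tendsto_intros) auto
  hence lim2: "(\<lambda>n. coeff (Pn n) k) \<longlonglongrightarrow> A"
    by (simp add: taylor_coeff_poly)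
  have nn: "nnc (Pn n)" for n
    unfolding Pn_def by (rule PP_nnc[OF g_prod g_even g_coeffs p(1) p(2)])
  have "(\<lambda>n. Im (coeff (Pn n) k)) \<longlonglongrightarrow> Im A" by (rule tendsto_Im[OF lim2])
  moreover have "(\<lambda>n. Im (coeff (Pn n) k)) = (\<lambda>n. 0)" using nn by (simp add: nnc_def)
  ultimately have "Im A = 0" by (simp add: LIMSEQ_const_iff)
  moreover have "Re A \<ge> 0"
    by (rule LIMSEQ_le_const[OF tendsto_Re[OF lim2]]) (use nn in \<open>auto simp: nnc_def\<close>)
  ultimately show ?thesis unfolding A_def \<Phi>_def by simp
qed




lemma prod_nonzero:
  fixes h :: "complex \<Rightarrow> complex \<Rightarrow> complex"
  assumes "\<And>a. a \<in> set l \<Longrightarrow> h a holomorphic_on UNIV" "\<And>a. a \<in> set l \<Longrightarrow> \<exists>w. h a w \<noteq> 0"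
  shows "\<exists>w. (\<Prod>a\<leftarrow>l. h a w) \<noteq> 0"
  using assms
proof (induction l)
  case Nil then show ?case by simp
next
  case (Cons a l)
  obtain w1 where w1: "(\<Prod>a\<leftarrow>l. h a w1) \<noteq> 0" using Cons by auto
  show ?case
  proof (rule ccontr)
    assume "\<not> (\<exists>w. (\<Prod>a\<leftarrow>a # l. h a w) \<noteq> 0)"
    hence z: "h a w * (\<Prod>a\<leftarrow>l. h a w) = 0" for w by simp
    have "continuous_on UNIV (\<lambda>w. \<Prod>a\<leftarrow>l. h a w)"
      by (intro holomorphic_on_imp_continuous_on hol_prod_list) (use Cons.prems in auto)
    from continuous_on_open_avoid[OF this open_UNIV _ w1]
    obtain r where r: "r > 0" "\<And>y. dist w1 y < r \<Longrightarrow> (\<Prod>a\<leftarrow>l. h a y) \<noteq> 0" by auto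
    have ha0: "h a y = 0" if "y \<in> ball w1 r" for y
      using z[of y] r(2)[of y] that by auto
    have "h a y = 0" for y
      by (rule analytic_continuation_open[of "ball w1 r" UNIV "h a" "\<lambda>_. 0"])
         (use r Cons.prems ha0 in auto)
    thus False using Cons.prems(2)[of a] by auto
  qed
qed

lemma split_zero_factors:
  fixes f :: "complex \<Rightarrow> complex" and x t :: complex
  shows "(\<Prod>a\<leftarrow>l. f (x + a * t)) = f x ^ length (filter (\<lambda>a. a = 0) l) * (\<Prod>a\<leftarrow>filter (\<lambda>a. a \<noteq> 0) l. (f (x + a * t) :: complex))"
  by (induction l) (auto simp: mult_ac)

lemma zeros_real:
  fixes f :: "complex \<Rightarrow> complex" and g :: "complex poly" and \<alpha>s :: "complex list"
  assumes fh: "f holomorphic_on UNIV"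
    and fnz: "\<exists>z. f z \<noteq> 0"
    and g_prod: "g = (\<Prod>a\<leftarrow>\<alpha>s. [:a, 1:])"
    and g_even: "\<And>z. poly g (- z) = poly g z"
    and g_nonreal_root: "\<exists>z. poly g z = 0 \<and> z \<notin> \<real>"
    and hyp: "\<And>k x. Im ((deriv ^^ k) (\<lambda>t. \<Prod>a\<leftarrow>\<alpha>s. f (complex_of_real x + a * t)) 0 / fact k) = 0 \<and>
         Re ((deriv ^^ k) (\<lambda>t. \<Prod>a\<leftarrow>\<alpha>s. f (complex_of_real x + a * t)) 0 / fact k) \<ge> 0"
    and z0: "f z0 = 0"
  shows "z0 \<in> \<real>"
proof (rule ccontr)
  assume z0R: "z0 \<notin> \<real>"
  define \<Phi> where "\<Phi> = (\<lambda>x t. \<Prod>a\<leftarrow>\<alpha>s. f (complex_of_real x + a * t))"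
  define A where "A = (\<lambda>k x. (deriv ^^ k) (\<Phi> x) 0 / fact k)"
  have hA: "Im (A k x) = 0" "Re (A k x) \<ge> 0" for k x
    using hyp[of k x] by (simp_all add: A_def \<Phi>_def)
  have fc: "continuous_on UNIV f" using fh holomorphic_on_imp_continuous_on by blast
  have hol1: "(\<lambda>t. f (u + a * t)) holomorphic_on UNIV" for u a
  proof -
    have "(\<lambda>t. u + a * t) holomorphic_on UNIV" by (intro holomorphic_intros)
    from holomorphic_on_compose_gen[OF this fh] show ?thesis by (simp add: o_def)
  qed
  have holPhi: "\<Phi> x holomorphic_on UNIV" for x
    unfolding \<Phi>_def by (intro hol_prod_list hol1)
  have sums: "(\<lambda>k. A k x * t ^ k) sums \<Phi> x t" for x t
  proof -
    have "(\<lambda>n. (deriv ^^ n) (\<Phi> x) 0 / fact n * (t - 0) ^ n) sums \<Phi> x t"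
      by (rule holomorphic_power_series[of _ 0 "norm t + 1"])
         (use holomorphic_on_subset[OF holPhi] in auto)
    thus ?thesis by (simp add: A_def)
  qed
  have realsum: "Im (\<Phi> x (complex_of_real t)) = 0 \<and> Re (\<Phi> x (complex_of_real t)) = (\<Sum>k. Re (A k x) * t ^ k)
     \<and> (\<lambda>k. Re (A k x) * t ^ k) sums Re (\<Phi> x (complex_of_real t))" for x t
  proof -
    have s: "(\<lambda>k. A k x * complex_of_real t ^ k) sums \<Phi> x (complex_of_real t)" by (rule sums)
    have "(\<lambda>k. Im (A k x * complex_of_real t ^ k)) sums Im (\<Phi> x (complex_of_real t))"
      by (rule sums_Im[OF s])
    moreover have "(\<lambda>k. Im (A k x * complex_of_real t ^ k)) = (\<lambda>k. 0)"
      using hA by (simp flip: of_real_power)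
    ultimately have "(\<lambda>k. 0::real) sums Im (\<Phi> x (complex_of_real t))" by simp
    hence "Im (\<Phi> x (complex_of_real t)) = 0" by (simp add: sums_iff)
    moreover have r: "(\<lambda>k. Re (A k x * complex_of_real t ^ k)) sums Re (\<Phi> x (complex_of_real t))"
      by (rule sums_Re[OF s])
    moreover have "(\<lambda>k. Re (A k x * complex_of_real t ^ k)) = (\<lambda>k. Re (A k x) * t ^ k)"
      using hA by (simp flip: of_real_power)
    ultimately show ?thesis by (simp add: sums_iff)
  qed
  have mono: "norm (\<Phi> x (complex_of_real s)) \<le> norm (\<Phi> x (complex_of_real t))" if "0 \<le> s" "s \<le> t" for x s t
  proof -
    have s1: "(\<lambda>k. Re (A k x) * s ^ k) sums Re (\<Phi> x (complex_of_real s))" using realsum by blast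
    have s2: "(\<lambda>k. Re (A k x) * t ^ k) sums Re (\<Phi> x (complex_of_real t))" using realsum by blast
    have le: "\<And>k. Re (A k x) * s ^ k \<le> Re (A k x) * t ^ k"
      using that hA by (intro mult_left_mono power_mono) auto
    have le0: "\<And>k. 0 \<le> Re (A k x) * s ^ k"
      using that hA by auto
    have "Re (\<Phi> x (complex_of_real s)) \<le> Re (\<Phi> x (complex_of_real t))"
      by (rule sums_le[OF le s1 s2])
    moreover have "0 \<le> Re (\<Phi> x (complex_of_real s))"
      by (rule sums_le[OF le0 sums_zero s1])
    ultimately show ?thesis using realsum[of x s] realsum[of x t] by (simp add: cmod_eq_Re)
  qed
  obtain w where w: "poly g w = 0" "w \<notin> \<real>" using g_nonreal_root by blast
  have pg: "poly g z = (\<Prod>a\<leftarrow>\<alpha>s. a + z)" for z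
    unfolding g_prod by (simp add: poly_prod_list_map)
  have "(\<Prod>a\<leftarrow>\<alpha>s. a + w) = 0" using w pg by simp
  then obtain a1 where a1: "a1 \<in> set \<alpha>s" "a1 + w = 0" by (auto simp: prod_list_zero_iff)
  have "(\<Prod>a\<leftarrow>\<alpha>s. a + - w) = 0" using w pg g_even[of w] by simp
  then obtain a2 where a2: "a2 \<in> set \<alpha>s" "a2 + - w = 0" by (auto simp: prod_list_zero_iff)
  have Imw: "Im w \<noteq> 0" using w(2) by (simp add: complex_is_Real_iff)
  have Imz0: "Im z0 \<noteq> 0" using z0R by (simp add: complex_is_Real_iff)
  obtain \<alpha> where \<alpha>: "\<alpha> \<in> set \<alpha>s" "Im \<alpha> * Im z0 > 0"
  proof (cases "Im w * Im z0 > 0")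
    case True
    have "a2 = w" using a2 by (simp add: algebra_simps)
    thus ?thesis using that a2 True by blast
  next
    case False
    have "a1 = - w" using a1 by (simp add: algebra_simps add_eq_0_iff)
    moreover have p: "Im w * Im z0 \<noteq> 0" using Imw Imz0 by simp
    have "Im w * Im z0 < 0" using p False by linarith
    ultimately have "Im a1 * Im z0 > 0" by simp
    thus ?thesis using that a1 by blast
  qed
  have \<alpha>0: "\<alpha> \<noteq> 0" using \<alpha> by auto
  have Ima: "Im \<alpha> \<noteq> 0" using \<alpha> by auto
  define ts where "ts = Im z0 / Im \<alpha>"
  define xs where "xs = Re z0 - Re \<alpha> * ts"
  have ts: "ts > 0" unfolding ts_def using \<alpha>(2)
    by (auto simp: zero_less_divide_iff zero_less_mult_iff)
  have z0eq: "complex_of_real xs + \<alpha> * complex_of_real ts = z0"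
    using Ima by (simp add: complex_eq_iff xs_def ts_def field_simps)
  define L where "L = filter (\<lambda>a. a \<noteq> 0) \<alpha>s"
  define m0 where "m0 = length (filter (\<lambda>a. a = 0) \<alpha>s)"
  define H where "H = (\<lambda>u t. \<Prod>a\<leftarrow>L. f (u + a * t))"
  have PhiH: "\<Phi> x t = f (complex_of_real x) ^ m0 * H (complex_of_real x) t" for x t
    unfolding \<Phi>_def H_def L_def m0_def by (rule split_zero_factors)
  have \<alpha>L: "\<alpha> \<in> set L" using \<alpha> \<alpha>0 by (simp add: L_def)
  have Hts: "H (complex_of_real xs) (complex_of_real ts) = 0"
    unfolding H_def using \<alpha>L z0eq z0 by (auto simp: prod_list_zero_iff)
  have Hcont: "continuous_on UNIV (\<lambda>y::real. H (complex_of_real y) t)" for t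
    unfolding H_def
    by (intro cont_prod_list continuous_on_compose2[OF fc]) (auto intro!: continuous_intros)
  have ev_nz: "\<forall>\<^sub>F y in at xs. f (complex_of_real y) \<noteq> 0"
  proof -
    obtain z1 where z1: "f z1 \<noteq> 0" using fnz by blast
    have "\<forall>\<^sub>F w in at (complex_of_real xs). f w \<noteq> 0 \<and> w \<in> UNIV"
      by (rule non_zero_neighbour_alt[OF fh open_UNIV connected_UNIV _ _ z1]) auto
    then obtain d where d: "d > 0" "\<And>w. w \<noteq> complex_of_real xs \<Longrightarrow> dist w (complex_of_real xs) < d \<Longrightarrow> f w \<noteq> 0"
      unfolding eventually_at by auto
    show ?thesis unfolding eventually_at
      by (intro exI[of _ d]) (use d in \<open>auto simp: dist_of_real\<close>)
  qed
  have Hzero: "H (complex_of_real xs) (complex_of_real s) = 0" if s: "0 \<le> s" "s \<le> ts" for s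
  proof (rule ccontr)
    assume nz: "H (complex_of_real xs) (complex_of_real s) \<noteq> 0"
    define c where "c = norm (H (complex_of_real xs) (complex_of_real s))"
    have c: "c > 0" using nz by (simp add: c_def)
    have t1: "((\<lambda>y. norm (H (complex_of_real y) (complex_of_real s))) \<longlongrightarrow> c) (at xs)"
      unfolding c_def
      by (intro tendsto_norm) (use Hcont[of "complex_of_real s"] in \<open>auto simp: continuous_on_def\<close>)
    have t2: "((\<lambda>y. norm (H (complex_of_real y) (complex_of_real ts))) \<longlongrightarrow> 0) (at xs)"
    proof -
      have "((\<lambda>y. H (complex_of_real y) (complex_of_real ts)) \<longlongrightarrow> H (complex_of_real xs) (complex_of_real ts)) (at xs)"
        using Hcont[of "complex_of_real ts"] by (simp add: continuous_on_def)
      hence "((\<lambda>y. H (complex_of_real y) (complex_of_real ts)) \<longlongrightarrow> 0) (at xs)" using Hts by simp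
      from tendsto_norm[OF this] show ?thesis by simp
    qed
    have e1: "\<forall>\<^sub>F y in at xs. norm (H (complex_of_real y) (complex_of_real s)) > c / 2"
      using order_tendstoD(1)[OF t1, of "c/2"] c by simp
    have e2: "\<forall>\<^sub>F y in at xs. norm (H (complex_of_real y) (complex_of_real ts)) < c / 2"
      using order_tendstoD(2)[OF t2, of "c/2"] c by simp
    obtain y where y: "f (complex_of_real y) \<noteq> 0" "norm (H (complex_of_real y) (complex_of_real s)) > c / 2"
        "norm (H (complex_of_real y) (complex_of_real ts)) < c / 2"
      using eventually_happens'[OF trivial_limit_at eventually_conj[OF ev_nz eventually_conj[OF e1 e2]]] by blast
    have "norm (\<Phi> y (complex_of_real s)) \<le> norm (\<Phi> y (complex_of_real ts))"
      by (rule mono) (use s in auto)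
    hence "norm (f (complex_of_real y)) ^ m0 * norm (H (complex_of_real y) (complex_of_real s))
         \<le> norm (f (complex_of_real y)) ^ m0 * norm (H (complex_of_real y) (complex_of_real ts))"
      unfolding PhiH by (simp add: norm_mult norm_power)
    moreover have "norm (f (complex_of_real y)) ^ m0 > 0" using y(1) by simp
    ultimately have "norm (H (complex_of_real y) (complex_of_real s)) \<le> norm (H (complex_of_real y) (complex_of_real ts))"
      by (simp add: mult_le_cancel_left_pos)
    thus False using y by simp
  qed
  have holH: "H (complex_of_real xs) holomorphic_on UNIV"
    unfolding H_def by (intro hol_prod_list hol1)
  have Hall: "H (complex_of_real xs) w = 0" for w
  proof (rule analytic_continuation[OF holH open_UNIV connected_UNIV, where U = "complex_of_real ` {0..ts}" and \<xi> = 0])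
    show "0 islimpt complex_of_real ` {0..ts}"
      unfolding islimpt_approachable
    proof (intro allI impI)
      fix e :: real assume e: "e > 0"
      show "\<exists>x'\<in>complex_of_real ` {0..ts}. x' \<noteq> 0 \<and> dist x' 0 < e"
        by (rule bexI[of _ "complex_of_real (min ts (e/2))"]) (use e ts in \<open>auto simp: dist_norm\<close>)
    qed
    show "\<And>z. z \<in> complex_of_real ` {0..ts} \<Longrightarrow> H (complex_of_real xs) z = 0"
      using Hzero by auto
  qed auto
  have "\<exists>w. (\<Prod>a\<leftarrow>L. f (complex_of_real xs + a * w)) \<noteq> 0"
  proof (rule prod_nonzero)
    show "(\<lambda>w. f (complex_of_real xs + a * w)) holomorphic_on UNIV" for a by (rule hol1)
    fix a assume a: "a \<in> set L"
    hence a0: "a \<noteq> 0" by (simp add: L_def)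
    obtain z1 where z1: "f z1 \<noteq> 0" using fnz by blast
    have "complex_of_real xs + a * ((z1 - complex_of_real xs) / a) = z1" using a0 by (simp add: field_simps)
    thus "\<exists>w. f (complex_of_real xs + a * w) \<noteq> 0" using z1 by metis
  qed
  thus False using Hall unfolding H_def by simp
qed




lemma E1_wf: "E1 w = weierstrass_factor 1 w"
  by (simp add: E1_def weierstrass_factor_def)

lemma E1_bound_ev:
  fixes a :: "nat \<Rightarrow> complex"
  assumes sa: "summable (\<lambda>n. 1 / (cmod (a n))\<^sup>2)" and R: "R > 0"
  shows "\<forall>\<^sub>F n in sequentially. \<forall>z\<in>cball 0 R. norm (E1 (z / a n) - 1) \<le> 3 * R\<^sup>2 * (1 / (cmod (a n))\<^sup>2)"
proof -
  have "(\<lambda>n. 1 / (cmod (a n))\<^sup>2) \<longlonglongrightarrow> 0" by (rule summable_LIMSEQ_zero[OF sa])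
  hence ev: "\<forall>\<^sub>F n in sequentially. 1 / (cmod (a n))\<^sup>2 < 1 / (4 * R\<^sup>2)"
    using R by (intro order_tendstoD(2)) auto
  show ?thesis
  proof (rule eventually_mono[OF ev], intro ballI)
    fix n and z :: complex assume n: "1 / (cmod (a n))\<^sup>2 < 1 / (4 * R\<^sup>2)" and z: "z \<in> cball 0 R"
    have nz: "norm z \<le> R" using z by simp
    have sq: "(norm (z / a n))\<^sup>2 = (norm z)\<^sup>2 * (1 / (cmod (a n))\<^sup>2)"
      by (simp add: norm_divide power_divide)
    have "(norm z)\<^sup>2 \<le> R\<^sup>2" using nz by (intro power_mono) auto
    hence sqle: "(norm (z / a n))\<^sup>2 \<le> R\<^sup>2 * (1 / (cmod (a n))\<^sup>2)"
      unfolding sq by (intro mult_right_mono) auto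
    also have "\<dots> \<le> R\<^sup>2 * (1 / (4 * R\<^sup>2))" using n by (intro mult_left_mono) auto
    also have "\<dots> = (1/2)\<^sup>2" using R by (simp add: power2_eq_square field_simps)
    finally have "norm (z / a n) \<le> 1 / 2" by (rule power2_le_imp_le) auto
    hence "norm (weierstrass_factor 1 (z / a n) - 1) \<le> 3 * norm (z / a n) ^ Suc 1"
      by (rule weierstrass_factor_bound)
    also have "\<dots> = 3 * (norm (z / a n))\<^sup>2" by (simp add: power2_eq_square)
    also have "\<dots> \<le> 3 * (R\<^sup>2 * (1 / (cmod (a n))\<^sup>2))" using sqle by simp
    finally show "norm (E1 (z / a n) - 1) \<le> 3 * R\<^sup>2 * (1 / (cmod (a n))\<^sup>2)"
      by (simp add: E1_wf mult_ac)
  qed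
qed

lemma E1_convergent:
  fixes a :: "nat \<Rightarrow> complex"
  assumes sa: "summable (\<lambda>n. 1 / (cmod (a n))\<^sup>2)"
  shows "convergent_prod (\<lambda>n. E1 (z / a n))"
proof -
  define R where "R = norm z + 1"
  have R: "R > 0" "z \<in> cball 0 R" by (auto simp: R_def add_nonneg_pos)
  have "abs_convergent_prod (\<lambda>n. E1 (z / a n))"
    unfolding abs_convergent_prod_conv_summable
  proof (rule summable_comparison_test_ev)
    show "\<forall>\<^sub>F n in sequentially. norm (norm (E1 (z / a n) - 1)) \<le> 3 * R\<^sup>2 * (1 / (cmod (a n))\<^sup>2)"
      by (rule eventually_mono[OF E1_bound_ev[OF sa R(1)]]) (use R(2) in simp)
    show "summable (\<lambda>n. 3 * R\<^sup>2 * (1 / (cmod (a n))\<^sup>2))"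
      by (intro summable_mult sa)
  qed
  thus ?thesis by (rule abs_convergent_prod_imp_convergent_prod)
qed

lemma E1_uniform:
  fixes a :: "nat \<Rightarrow> complex"
  assumes sa: "summable (\<lambda>n. 1 / (cmod (a n))\<^sup>2)" and R: "R > 0"
  shows "uniform_limit (cball 0 R) (\<lambda>N z. \<Prod>n<N. E1 (z / a n)) (\<lambda>z. \<Prod>n. E1 (z / a n)) sequentially"
proof -
  have "uniformly_convergent_on (cball 0 R) (\<lambda>N z. \<Prod>n<N. E1 (z / a n))"
  proof (rule uniformly_convergent_on_prod')
    show "uniformly_convergent_on (cball 0 R) (\<lambda>N z. \<Sum>n<N. norm (E1 (z / a n) - 1))"
    proof (rule Weierstrass_m_test'_ev)
      show "\<forall>\<^sub>F n in sequentially. \<forall>z\<in>cball 0 R. norm (norm (E1 (z / a n) - 1)) \<le> 3 * R\<^sup>2 * (1 / (cmod (a n))\<^sup>2)"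
        using E1_bound_ev[OF sa R] by simp
      show "summable (\<lambda>n. 3 * R\<^sup>2 * (1 / (cmod (a n))\<^sup>2))"
        by (intro summable_mult sa)
    qed
    show "continuous_on (cball 0 R) (\<lambda>z. E1 (z / a n))" for n
      unfolding E1_def divide_inverse by (intro continuous_intros)
  qed (rule compact_cball)
  then obtain G where G: "uniform_limit (cball 0 R) (\<lambda>N z. \<Prod>n<N. E1 (z / a n)) G sequentially"
    unfolding uniformly_convergent_on_def by blast
  also have "?this \<longleftrightarrow> uniform_limit (cball 0 R) (\<lambda>N z. \<Prod>n<N. E1 (z / a n)) (\<lambda>z. \<Prod>n. E1 (z / a n)) sequentially"
  proof (intro uniform_limit_cong)
    fix z :: complex assume zR: "z \<in> cball 0 R"
    have "(\<lambda>n. \<Prod>i<Suc n. E1 (z / a i)) \<longlonglongrightarrow> G z"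
      using LIMSEQ_Suc[OF tendsto_uniform_limitI[OF G zR]] .
    moreover have "(\<lambda>n. \<Prod>i<Suc n. E1 (z / a i)) \<longlonglongrightarrow> (\<Prod>n. E1 (z / a n))"
      using convergent_prod_LIMSEQ[OF E1_convergent[OF sa, of z]] unfolding lessThan_Suc_atMost .
    ultimately show "G z = (\<Prod>n. E1 (z / a n))"
      by (rule LIMSEQ_unique)
  qed simp
  finally show ?thesis .
qed

lemma E1_prod_zero:
  fixes a :: "nat \<Rightarrow> complex"
  assumes sa: "summable (\<lambda>n. 1 / (cmod (a n))\<^sup>2)" and an: "a k \<noteq> 0"
  shows "(\<Prod>n. E1 (a k / a n)) = 0"
proof -
  have "(\<lambda>n. E1 (a k / a n)) has_prod (\<Prod>n. E1 (a k / a n))"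
    using E1_convergent[OF sa] by (rule convergent_prod_has_prod)
  moreover have "E1 (a k / a k) = 0" using an by (simp add: E1_def)
  hence "0 \<in> range (\<lambda>n. E1 (a k / a n))" by (metis rangeI)
  ultimately show ?thesis using has_prod_eq_0_iff by blast
qed

lemma E1_prod_real:
  fixes a :: "nat \<Rightarrow> complex"
  assumes sa: "summable (\<lambda>n. 1 / (cmod (a n))\<^sup>2)" and ar: "\<And>n. a n \<in> \<real>"
  shows "(\<Prod>n. E1 (complex_of_real x / a n)) \<in> \<real>"
proof -
  have lim: "(\<lambda>N. \<Prod>i\<le>N. E1 (complex_of_real x / a i)) \<longlonglongrightarrow> (\<Prod>n. E1 (complex_of_real x / a n))"
    by (rule convergent_prod_LIMSEQ[OF E1_convergent[OF sa]])
  have r: "(\<Prod>i\<le>N. E1 (complex_of_real x / a i)) \<in> \<real>" for N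
  proof -
    have "E1 (complex_of_real x / a i) \<in> \<real>" for i
    proof -
      have "complex_of_real x / a i \<in> \<real>" using ar[of i] by simp
      thus ?thesis unfolding E1_def by (intro Reals_mult Reals_diff exp_in_Reals) auto
    qed
    thus ?thesis by (intro prod_in_Reals)
  qed
  have "(\<lambda>N. Im (\<Prod>i\<le>N. E1 (complex_of_real x / a i))) \<longlonglongrightarrow> Im (\<Prod>n. E1 (complex_of_real x / a n))"
    by (rule tendsto_Im[OF lim])
  moreover have "(\<lambda>N. Im (\<Prod>i\<le>N. E1 (complex_of_real x / a i))) = (\<lambda>N. 0)"
    using r by (simp add: complex_is_Real_iff)
  ultimately have "Im (\<Prod>n. E1 (complex_of_real x / a n)) = 0" by (simp add: LIMSEQ_const_iff)
  thus ?thesis by (simp add: complex_is_Real_iff)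
qed




lemma rpoly_const: "c \<in> \<real> \<Longrightarrow> c \<noteq> 0 \<Longrightarrow> rpoly [:c:]"
  unfolding rpoly_def by (auto simp: coeff_pCons split: nat.splits)

lemma rpoly_1: "rpoly 1"
  unfolding rpoly_def by (auto simp: coeff_1)

lemma rpoly_X: "rpoly [:0, 1:]"
  unfolding rpoly_def by (auto simp: coeff_pCons split: nat.splits)

lemma rpoly_prod_lin:
  fixes N :: nat
  assumes "\<And>n. a n \<in> \<real>"
  shows "rpoly (\<Prod>n<N. [:1, - 1 / a n:])"
proof (induction N)
  case 0 then show ?case by (simp add: rpoly_1)
next
  case (Suc N)
  have "rpoly [:1, - 1 / a N:]" using assms[of N] by (intro rpoly_linear) auto
  thus ?case unfolding prod.lessThan_Suc by (rule rpoly_mult[OF Suc])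
qed

lemma genus_LPA:
  fixes f f1 :: "complex \<Rightarrow> complex" and b :: real and c \<beta> :: complex and m :: nat
    and a :: "nat \<Rightarrow> complex"
  assumes b: "b \<ge> 0"
    and f_def: "\<And>z. f z = exp (- complex_of_real b * z\<^sup>2) * f1 z"
    and f1h: "f1 holomorphic_on UNIV"
    and f1r: "\<And>x::real. f1 (complex_of_real x) \<in> \<real>"
    and c0: "c \<noteq> 0"
    and sa: "summable (\<lambda>n. 1 / (cmod (a n))\<^sup>2)"
    and f1eq: "\<And>z. f1 z = c * z ^ m * exp (\<beta> * z) * (\<Prod>n. E1 (z / a n))"
    and zr: "\<And>z. f z = 0 \<Longrightarrow> z \<in> \<real>"
    and f1nz: "\<exists>z. f1 z \<noteq> 0"
  shows "LPA f"
proof -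
  define P where "P = (\<lambda>z. \<Prod>n. E1 (z / a n))"
  have f1P: "f1 z = c * z ^ m * exp (\<beta> * z) * P z" for z using f1eq by (simp add: P_def)
  have ar: "a n \<in> \<real>" for n
  proof (cases "a n = 0")
    case False
    have "P (a n) = 0" unfolding P_def by (rule E1_prod_zero[OF sa False])
    hence "f (a n) = 0" by (simp add: f_def f1P)
    thus ?thesis by (rule zr)
  qed simp
  have Pr: "P (complex_of_real x) \<in> \<real>" for x
    unfolding P_def by (rule E1_prod_real[OF sa ar])
  obtain z1 where z1: "f1 z1 \<noteq> 0" using f1nz by blast
  have "\<forall>\<^sub>F w in at 0. f1 w \<noteq> 0 \<and> w \<in> UNIV"
    by (rule non_zero_neighbour_alt[OF f1h open_UNIV connected_UNIV _ _ z1]) auto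
  then obtain d where d: "d > 0" "\<And>w. w \<noteq> 0 \<Longrightarrow> dist w 0 < d \<Longrightarrow> f1 w \<noteq> 0"
    unfolding eventually_at by auto
  define q where "q = (\<lambda>x::real. c * exp (\<beta> * complex_of_real x))"
  have qr: "q x \<in> \<real>" if x: "0 < x" "x < d" for x
  proof -
    have nz: "f1 (complex_of_real x) \<noteq> 0" using d(2)[of "complex_of_real x"] x by auto
    have eq: "f1 (complex_of_real x) = q x * (complex_of_real x ^ m * P (complex_of_real x))"
      by (simp add: f1P q_def mult_ac)
    hence "complex_of_real x ^ m * P (complex_of_real x) \<noteq> 0" using nz by auto
    hence "q x = f1 (complex_of_real x) / (complex_of_real x ^ m * P (complex_of_real x))"
      using eq by (simp add: field_simps)
    also have "\<dots> \<in> \<real>" using f1r Pr by (intro Reals_divide Reals_mult Reals_power) auto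
    finally show ?thesis .
  qed
  define x1 where "x1 = d / 2"
  have x1: "0 < x1" "x1 < d" using d by (auto simp: x1_def)
  have qx1: "q x1 \<noteq> 0" using c0 by (simp add: q_def)
  have Imb: "Im \<beta> = 0"
  proof (rule ccontr)
    assume nb: "Im \<beta> \<noteq> 0"
    define h where "h = min (d / 4) (1 / \<bar>Im \<beta>\<bar>)"
    have h: "h > 0" "h \<le> d / 4" "h \<le> 1 / \<bar>Im \<beta>\<bar>" using d nb by (auto simp: h_def)
    have "q (x1 + h) / q x1 = exp (\<beta> * complex_of_real h)"
      using c0 by (simp add: q_def distrib_left exp_add field_simps)
    moreover have "q (x1 + h) / q x1 \<in> \<real>"
      using qr[of "x1 + h"] qr[OF x1] h x1 by (intro Reals_divide) (auto simp: x1_def)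
    ultimately have "Im (exp (\<beta> * complex_of_real h)) = 0" by (metis complex_is_Real_iff)
    hence "sin (Im \<beta> * h) = 0" by (simp add: Im_exp)
    moreover have "\<bar>Im \<beta> * h\<bar> < pi"
    proof -
      have "\<bar>Im \<beta> * h\<bar> = \<bar>Im \<beta>\<bar> * h" using h by (simp add: abs_mult)
      also have "\<dots> \<le> \<bar>Im \<beta>\<bar> * (1 / \<bar>Im \<beta>\<bar>)" using h by (intro mult_left_mono) auto
      also have "\<dots> = 1" using nb by simp
      also have "1 < pi" using pi_gt3 by simp
      finally show ?thesis .
    qed
    ultimately have "Im \<beta> * h = 0" using sin_zero_pi_iff by blast
    thus False using nb h by simp
  qed
  have \<beta>r: "\<beta> \<in> \<real>" using Imb by (simp add: complex_is_Real_iff)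
  have cr: "c \<in> \<real>"
  proof -
    have "c = q x1 / exp (\<beta> * complex_of_real x1)" by (simp add: q_def)
    also have "\<dots> \<in> \<real>" using qr[OF x1] \<beta>r by (intro Reals_divide exp_in_Reals) auto
    finally show ?thesis .
  qed
  define PN where "PN = (\<lambda>N z. \<Prod>n<N. E1 (z / a n))"
  define K where "K = (\<lambda>z. exp (- complex_of_real b * z\<^sup>2) * (c * z ^ m * exp (\<beta> * z)))"
  have fK: "f z = K z * P z" for z by (simp add: f_def f1P K_def mult_ac)
  define \<gamma> where "\<gamma> = (\<lambda>N. \<beta> + (\<Sum>n<N. 1 / a n))"
  define QN where "QN = (\<lambda>N. [:c:] * ([:0, 1:] ^ m * (\<Prod>n<N. [:1, - 1 / a n:])))"
  have FN: "K z * PN N z = poly (QN N) z * exp (\<gamma> N * z) * exp (- complex_of_real b * z\<^sup>2)" for N z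
  proof -
    have "PN N z = (\<Prod>n<N. (1 - z / a n)) * (\<Prod>n<N. exp (z / a n))"
      unfolding PN_def E1_def by (rule prod.distrib)
    also have "(\<Prod>n<N. exp (z / a n)) = exp (\<Sum>n<N. z / a n)" by (simp add: exp_sum)
    finally have PN: "PN N z = (\<Prod>n<N. (1 - z / a n)) * exp (\<Sum>n<N. z / a n)" .
    have g: "exp (\<gamma> N * z) = exp (\<beta> * z) * exp (\<Sum>n<N. z / a n)"
      by (simp add: \<gamma>_def distrib_right sum_distrib_right exp_add)
    have q: "poly (QN N) z = c * z ^ m * (\<Prod>n<N. (1 - z / a n))"
      by (simp add: QN_def poly_prod poly_power)
    show ?thesis unfolding PN g q K_def by (simp add: mult_ac)
  qed
  have \<gamma>r: "\<gamma> N \<in> \<real>" for N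
    unfolding \<gamma>_def using \<beta>r ar by (intro Reals_add sum_in_Reals Reals_divide) auto
  have rq: "rpoly (QN N)" for N
    unfolding QN_def using cr c0 ar
    by (intro rpoly_mult rpoly_const rpoly_power rpoly_X rpoly_prod_lin) auto
  have LPA_FN: "LPA (\<lambda>z. K z * PN N z)" for N
  proof -
    have eq: "(\<lambda>z. K z * PN N z) = (\<lambda>z. (poly (QN N) z * exp (\<gamma> N * z)) * exp (- complex_of_real b * z\<^sup>2))"
      using FN by (intro ext) simp
    have c1: "continuous_on UNIV (poly (QN N))"
      using poly_holomorphic_on[of "\<lambda>z. z" UNIV "QN N"] holomorphic_on_imp_continuous_on
      by (simp add: holomorphic_on_id)
    have l1: "LPA (\<lambda>z. poly (QN N) z * exp (\<gamma> N * z))"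
      by (rule LPA_mult[OF LPA_poly[OF rq] LPA_exp_lin[OF \<gamma>r] c1]) (intro continuous_intros)
    have l2: "LPA (\<lambda>z. (poly (QN N) z * exp (\<gamma> N * z)) * exp (- complex_of_real b * z\<^sup>2))"
      by (rule LPA_mult[OF l1 LPA_exp_quad[OF b]]) (use c1 in \<open>intro continuous_intros\<close>)+
    show ?thesis unfolding eq by (rule l2)
  qed
  have contPN: "continuous_on (cball 0 R) (PN N)" for R N
    unfolding PN_def E1_def divide_inverse by (intro continuous_intros)
  have ul: "uniform_limit (cball 0 R) (\<lambda>N z. K z * PN N z) (\<lambda>z. K z * P z) sequentially" if R: "R > 0" for R
  proof -
    have u: "uniform_limit (cball 0 R) PN P sequentially"
      unfolding PN_def P_def by (rule E1_uniform[OF sa R])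
    have cP: "continuous_on (cball 0 R) P"
      by (rule uniform_limit_theorem[OF _ u]) (use contPN in auto)
    have cK: "continuous_on (cball 0 R) K" unfolding K_def by (intro continuous_intros)
    have bK: "bounded (K ` cball 0 R)"
      by (intro compact_imp_bounded compact_continuous_image cK compact_cball)
    have bP: "bounded (P ` cball 0 R)"
      by (intro compact_imp_bounded compact_continuous_image cP compact_cball)
    show ?thesis
      using uniform_lim_mult[OF uniform_limit_const u bK bP] by simp
  qed
  show "LPA f"
  proof (rule LPA_limit)
    fix R e :: real assume R: "R > 0" and e: "e > 0"
    from uniform_limitD[OF ul[OF R] e]
    obtain N where N: "\<forall>z\<in>cball 0 R. dist (K z * PN N z) (K z * P z) < e"
      unfolding eventually_sequentially by blast
    show "\<exists>G. LPA G \<and> (\<forall>z\<in>cball 0 R. norm (G z - f z) < e)"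
      by (intro exI[of _ "\<lambda>z. K z * PN N z"] conjI LPA_FN) (use N in \<open>simp add: fK dist_norm\<close>)
  qed
qed




theorem theorem2:
  fixes f f1 :: "complex \<Rightarrow> complex" and b :: real
    and g :: "complex poly" and \<alpha>s :: "complex list"
  assumes b_nonneg: "b \<ge> 0"
    and f_def: "\<And>z. f z = exp (- complex_of_real b * z\<^sup>2) * f1 z"
    and f1_real: "real_entire f1"
    and f1_genus: "genus_le_1 f1"
    and f1_nonzero: "\<exists>z. f1 z \<noteq> 0"
    and g_prod: "g = (\<Prod>a\<leftarrow>\<alpha>s. [:a, 1:])"
    and g_even: "\<And>z. poly g (- z) = poly g z"
    and g_coeffs: "\<And>l. \<exists>c::real. c \<ge> 0 \<and> coeff g l = complex_of_real c"
    and g_nonreal_root: "\<exists>z. poly g z = 0 \<and> z \<notin> \<real>"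
  shows "laguerre_polya f \<longleftrightarrow>
    (\<forall>k::nat. \<forall>x::real.
       let A = (deriv ^^ k) (\<lambda>t. \<Prod>a\<leftarrow>\<alpha>s. f (complex_of_real x + a * t)) 0 / fact k
       in Im A = 0 \<and> Re A \<ge> 0)"
proof -
  have f1h: "f1 holomorphic_on UNIV" and f1r: "\<And>x::real. f1 (complex_of_real x) \<in> \<real>"
    using f1_real unfolding real_entire_def by auto
  have feq: "f = (\<lambda>z. exp (- complex_of_real b * z\<^sup>2) * f1 z)"
    by (rule ext) (rule f_def)
  have fh: "f holomorphic_on UNIV"
    unfolding feq by (intro holomorphic_intros f1h)
  have fc: "continuous_on UNIV f" using fh by (rule holomorphic_on_imp_continuous_on)
  have fnz: "\<exists>z. f z \<noteq> 0" using f1_nonzero by (auto simp: f_def)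
  show ?thesis
  proof
    assume LP: "laguerre_polya f"
    show "\<forall>k::nat. \<forall>x::real.
       let A = (deriv ^^ k) (\<lambda>t. \<Prod>a\<leftarrow>\<alpha>s. f (complex_of_real x + a * t)) 0 / fact k
       in Im A = 0 \<and> Re A \<ge> 0"
      unfolding Let_def
      using LP_imp_coeffs[OF g_prod g_even g_coeffs LP fc] by blast
  next
    assume H: "\<forall>k::nat. \<forall>x::real.
       let A = (deriv ^^ k) (\<lambda>t. \<Prod>a\<leftarrow>\<alpha>s. f (complex_of_real x + a * t)) 0 / fact k
       in Im A = 0 \<and> Re A \<ge> 0"
    have hyp: "Im ((deriv ^^ k) (\<lambda>t. \<Prod>a\<leftarrow>\<alpha>s. f (complex_of_real x + a * t)) 0 / fact k) = 0 \<and>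
         Re ((deriv ^^ k) (\<lambda>t. \<Prod>a\<leftarrow>\<alpha>s. f (complex_of_real x + a * t)) 0 / fact k) \<ge> 0" for k x
      using H unfolding Let_def by blast
    have zr: "\<And>z. f z = 0 \<Longrightarrow> z \<in> \<real>"
      by (rule zeros_real[OF fh fnz g_prod g_even g_nonreal_root hyp])
    obtain c m \<beta> a where gen: "c \<noteq> 0" "summable (\<lambda>n. 1 / (cmod (a n))\<^sup>2)"
        "\<And>z. f1 z = c * z ^ m * exp (\<beta> * z) * (\<Prod>n. E1 (z / a n))"
      using f1_genus unfolding genus_le_1_def by blast
    have "LPA f"
      by (rule genus_LPA[OF b_nonneg f_def f1h f1r gen(1) gen(2) gen(3) zr f1_nonzero])
    thus "laguerre_polya f" by (rule LPA_imp_LP)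
  qed
qed


end
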